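(* Let $d\ge2$, $n\ge1$, $d\le t\le dn$, and let $\gamma$ be a positive conductivity on the lattice graph below. Suppose $\mathbf u\in\mathbb R^{L_t^{\mathcal S}\cup J_{t-1}^{\mathcal S}}$ satisfies $\sum_{q\in\mathcal N(p)}\gamma_{pq}(\mathbf u_q-\mathbf u_p)=0$ for all $p\in L_{t-1}^{\mathcal S}$, $\mathbf u=0$ on $J_{t-1}^{\mathcal S}$, and $\gamma_{bq_b}(\mathbf u_{q_b}-\mathbf u_b)=0$ for all $b\in J_{t-1}^{\mathcal S}$. Then $\mathbf u=0$.
   Context: Lattice: $D=\{x\in\mathbb Z^d:1\le x_i\le n\ \forall i\}$, $\partial D=\{p\in\mathbb Z^d:\min_{q\in D}\|q-p\|_{\ell^1}=1\}$; $E$ = unordered pairs $pq\subseteq D\cup\partial D$ with $\|p-q\|_{\ell^1}=1$, not both in $\partial D$; $\mathcal N(p)=\{q:pq\in E\}$; each $b\in\partial D$ has exactly one neighbour $q_b$, which lies in $D$. Conductivity $\gamma:E\to(0,\infty)$, symmetric. With $s(x)=\sum_ix_i$: $L_t^{\mathcal S}=\{x\in D:s(x)\le t\}$, $K_t^+=\{x\in\partial D:s(x)=t,\max_ix_i=n+1\}$, $K_t^-=\{x\in\partial D:s(x)=t,\min_ix_i=0\}$, $K_t^{\mathcal S\pm}=\bigcup_{\ell\le t}K_\ell^\pm$, $J_t^{\mathcal S}=K_t^{\mathcal S-}\cup K_{t+1}^{\mathcal S+}$. (All neighbours of nodes of $L_{t-1}^{\mathcal S}$, and all $q_b$ with $b\in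 J_{t-1}^{\mathcal S}$, lie in $L_t^{\mathcal S}\cup J_{t-1}^{\mathcal S}$.) *)

theory Defs
  imports Complex_Main
begin

text \<open>Points of Z^d are represented as integer lists of length d.\<close>

definition l1dist :: "int list \<Rightarrow> int list \<Rightarrow> int" where
  "l1dist p q = (\<Sum>i<length p. \<bar>p ! i - q ! i\<bar>)"

definition latD :: "nat \<Rightarrow> nat \<Rightarrow> int list set" where
  "latD d n = {x. length x = d \<and> (\<forall>i<d. 1 \<le> x ! i \<and> x ! i \<le> int n)}"

definition bdry :: "nat \<Rightarrow> nat \<Rightarrow> int list set" where
  "bdry d n = {p. length p = d \<and> (\<forall>q\<in>latD d n. 1 \<le> l1dist q p)
                  \<and> (\<exists>q\<in>latD d n. l1dist q p = 1)}"

definition is_edge :: "nat \<Rightarrow> nat \<Rightarrow> int list \<Rightarrow> int list \<Rightarrow> bool" where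
  "is_edge d n p q \<longleftrightarrow> p \<in> latD d n \<union> bdry d n \<and> q \<in> latD d n \<union> bdry d n
      \<and> l1dist p q = 1 \<and> \<not> (p \<in> bdry d n \<and> q \<in> bdry d n)"

definition nbrs :: "nat \<Rightarrow> nat \<Rightarrow> int list \<Rightarrow> int list set" where
  "nbrs d n p = {q. is_edge d n p q}"

definition qb :: "nat \<Rightarrow> nat \<Rightarrow> int list \<Rightarrow> int list" where
  "qb d n b = (THE q. is_edge d n b q)"

definition LS :: "nat \<Rightarrow> nat \<Rightarrow> int \<Rightarrow> int list set" where
  "LS d n t = {x \<in> latD d n. sum_list x \<le> t}"

definition Kplus :: "nat \<Rightarrow> nat \<Rightarrow> int \<Rightarrow> int list set" where
  "Kplus d n t = {x \<in> bdry d n. sum_list x = t \<and> Max (set x) = int n + 1}"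

definition Kminus :: "nat \<Rightarrow> nat \<Rightarrow> int \<Rightarrow> int list set" where
  "Kminus d n t = {x \<in> bdry d n. sum_list x = t \<and> Min (set x) = 0}"

definition KSplus :: "nat \<Rightarrow> nat \<Rightarrow> int \<Rightarrow> int list set" where
  "KSplus d n t = (\<Union>l\<in>{l. l \<le> t}. Kplus d n l)"

definition KSminus :: "nat \<Rightarrow> nat \<Rightarrow> int \<Rightarrow> int list set" where
  "KSminus d n t = (\<Union>l\<in>{l. l \<le> t}. Kminus d n l)"

definition JS :: "nat \<Rightarrow> nat \<Rightarrow> int \<Rightarrow> int list set" where
  "JS d n t = KSminus d n t \<union> KSplus d n (t + 1)"

end

theory Submission
  imports Defs
begin

lemma sum_list_upd: "k < length xs \<Longrightarrow> sum_list (xs[k := v]) = sum_list xs + v - (xs ! k :: int)"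
  by (induction xs arbitrary: k) (auto split: nat.splits)

lemma l1_form:
  assumes "length p = length q" "l1dist p q = 1"
  shows "\<exists>j<length p. \<exists>e\<in>{-1,1}. q = p[j := p!j + e]"
proof -
  let ?f = "\<lambda>i. \<bar>p ! i - q ! i\<bar>"
  have s: "(\<Sum>i<length p. ?f i) = 1" using assms(2) by (simp add: l1dist_def)
  obtain j where j: "j < length p" "p!j \<noteq> q!j"
  proof (rule ccontr)
    assume "\<not> thesis"
    then have "\<forall>j<length p. p!j = q!j" using that by blast
    then have "(\<Sum>i<length p. ?f i) = 0" by simp
    with s show False by simp
  qed
  have split: "(\<Sum>i<length p. ?f i) = ?f j + (\<Sum>i\<in>{..<length p} - {j}. ?f i)"
    using j(1) by (simp add: sum.remove)
  have ge: "?f j \<ge> 1" using j(2) by simp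
  have rnn: "(\<Sum>i\<in>{..<length p} - {j}. ?f i) \<ge> 0" by (simp add: sum_nonneg)
  have fj: "?f j = 1" and r0: "(\<Sum>i\<in>{..<length p} - {j}. ?f i) = 0"
    using s split ge rnn by linarith+
  have "\<forall>i\<in>{..<length p} - {j}. ?f i = 0"
    using r0 by (subst (asm) sum_nonneg_eq_0_iff) auto
  then have oth: "\<And>i. i < length p \<Longrightarrow> i \<noteq> j \<Longrightarrow> q ! i = p ! i" by auto
  define e where "e = q!j - p!j"
  have e: "e \<in> {-1,1}" using fj unfolding e_def by (auto simp: abs_if split: if_splits)
  have "q = p[j := p!j + e]"
    by (rule nth_equalityI) (use assms(1) oth j in \<open>auto simp: e_def nth_list_update\<close>)
  then show ?thesis using j e by blast
qed

lemma edge_len: "is_edge d n p q \<Longrightarrow> length p = d \<and> length q = d"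
  by (auto simp: is_edge_def latD_def bdry_def)

lemma nbrs_fin: "finite (nbrs d n p)"
proof -
  have "nbrs d n p \<subseteq> (\<lambda>(j,e). p[j := p!j + e]) ` ({..<length p} \<times> {-1,1})"
  proof
    fix q assume "q \<in> nbrs d n p"
    then have E: "is_edge d n p q" by (simp add: nbrs_def)
    then have "l1dist p q = 1" by (simp add: is_edge_def)
    then obtain j e where "j < length p" "e \<in> {-1,1}" "q = p[j := p!j + e]"
      using l1_form edge_len[OF E] by metis
    then show "q \<in> (\<lambda>(j,e). p[j := p!j + e]) ` ({..<length p} \<times> {-1,1})" by force
  qed
  then show ?thesis by (rule finite_subset) auto
qed


lemma l1_upd:
  assumes "i < length x" "\<bar>e\<bar> = 1"
  shows "l1dist x (x[i := x!i + e]) = 1" "l1dist (x[i := x!i + e]) x = 1"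
proof -
  have "(\<Sum>k<length x. \<bar>x ! k - x[i := x!i + e] ! k\<bar>) = (\<Sum>k<length x. if k = i then 1 else 0)"
    by (rule sum.cong) (use assms in \<open>auto simp: nth_list_update\<close>)
  then show "l1dist x (x[i := x!i + e]) = 1" using assms by (simp add: l1dist_def)
  have "(\<Sum>k<length x. \<bar>x[i := x!i + e] ! k - x ! k\<bar>) = (\<Sum>k<length x. if k = i then 1 else 0)"
    by (rule sum.cong) (use assms in \<open>auto simp: nth_list_update\<close>)
  then show "l1dist (x[i := x!i + e]) x = 1" using assms by (simp add: l1dist_def)
qed

lemma l1_self: "l1dist x x = 0" by (simp add: l1dist_def)

lemma notD_far:
  assumes "length b = d" "b \<notin> latD d n" "q \<in> latD d n"
  shows "1 \<le> l1dist q b"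
proof -
  obtain k where k: "k < d" "\<not> (1 \<le> b!k \<and> b!k \<le> int n)" using assms(1,2) by (auto simp: latD_def)
  have q: "length q = d" "1 \<le> q!k" "q!k \<le> int n" using assms(3) k(1) by (auto simp: latD_def)
  have "\<bar>q!k - b!k\<bar> \<le> (\<Sum>i<length q. \<bar>q ! i - b ! i\<bar>)"
    by (rule member_le_sum) (use q k in auto)
  moreover have "1 \<le> \<bar>q!k - b!k\<bar>" using q k by auto
  ultimately show ?thesis by (simp add: l1dist_def)
qed

lemma D_not_bdry: "y \<in> latD d n \<Longrightarrow> y \<notin> bdry d n"
proof
  assume a: "y \<in> latD d n" "y \<in> bdry d n"
  then have "1 \<le> l1dist y y" unfolding bdry_def by blast
  then show False by (simp add: l1_self)
qed

lemma adj_out: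
  assumes x: "x \<in> latD d n" and i: "i < d" and e: "\<bar>e\<bar> = 1"
    and nb: "x[i := x!i + e] \<notin> latD d n"
  shows "x[i := x!i + e] \<in> bdry d n" "is_edge d n x (x[i := x!i + e])" "is_edge d n (x[i := x!i + e]) x"
proof -
  let ?b = "x[i := x!i + e]"
  have lx: "length x = d" using x by (simp add: latD_def)
  show bb: "?b \<in> bdry d n" unfolding bdry_def
    using notD_far[of ?b d n] nb lx i e l1_upd[of i x e] x by auto
  have "x \<notin> bdry d n" using x by (rule D_not_bdry)
  then show "is_edge d n x ?b" "is_edge d n ?b x"
    using x bb l1_upd[of i x e] lx i e by (auto simp: is_edge_def)
qed

lemma adj_in:
  assumes x: "x \<in> latD d n" and i: "i < d" and e: "\<bar>e\<bar> = 1"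
    and nb: "x[i := x!i + e] \<in> latD d n"
  shows "is_edge d n x (x[i := x!i + e])"
proof -
  have lx: "length x = d" using x by (simp add: latD_def)
  have "y \<notin> bdry d n" if "y \<in> latD d n" for y using that by (rule D_not_bdry)
  then show ?thesis using x nb l1_upd[of i x e] lx i e by (auto simp: is_edge_def)
qed

lemma qb_low:
  assumes x: "x \<in> latD d n" and i: "i < d" and xi: "x!i = 1"
  shows "qb d n (x[i := 0]) = x" "x[i := 0] \<in> bdry d n" "is_edge d n (x[i := 0]) x"
proof -
  have eq: "x[i := 0] = x[i := x!i + (-1)]" using xi by simp
  have nb: "x[i := 0] \<notin> latD d n" using i by (auto simp: latD_def)
  show bb: "x[i := 0] \<in> bdry d n" and E: "is_edge d n (x[i := 0]) x"
    using adj_out[OF x i, of "-1"] nb eq by auto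
  have lx: "length x = d" using x by (simp add: latD_def)
  have uniq: "q = x" if Q: "is_edge d n (x[i := 0]) q" for q
  proof -
    have "l1dist (x[i := 0]) q = 1" "length q = d" using Q edge_len[OF Q] by (auto simp: is_edge_def)
    then have "\<exists>j<d. \<exists>e\<in>{-1,1}. q = (x[i := 0])[j := (x[i := 0])!j + e]"
      using l1_form[of "x[i := 0]" q] lx by simp
    then obtain j e where j: "j < d" "e \<in> {-1,1}" and qe: "q = (x[i := 0])[j := (x[i := 0])!j + e]"
      by blast
    have qD: "q \<in> latD d n" using Q bb by (auto simp: is_edge_def)
    have "j = i"
    proof (rule ccontr)
      assume "j \<noteq> i"
      then have "q!i = 0" using qe i lx by (simp add: nth_list_update)
      then show False using qD i by (auto simp: latD_def)
    qed
    then have "q = x[i := e]" using qe i lx by simp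
    moreover have "e = 1" using qD \<open>q = x[i := e]\<close> i lx j(2) by (auto simp: latD_def)
    ultimately show "q = x" using xi by (metis list_update_id)
  qed
  show "qb d n (x[i := 0]) = x" unfolding qb_def
    by (rule the_equality) (use E uniq in auto)
qed


lemma D_facts: "y \<in> latD d n \<Longrightarrow> length y = d \<and> (\<forall>i<d. 1 \<le> y!i \<and> y!i \<le> int n)"
  by (simp add: latD_def)

lemma D_sum_nonneg: "y \<in> latD d n \<Longrightarrow> 0 \<le> sum_list y"
  by (rule sum_list_nonneg) (auto simp: latD_def in_set_conv_nth)

theorem lemma3p1:
  fixes d n :: nat and t :: int
    and \<gamma> :: "int list \<Rightarrow> int list \<Rightarrow> real"
    and u :: "int list \<Rightarrow> real"
  assumes "d \<ge> 2" and "n \<ge> 1"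
    and "int d \<le> t" and "t \<le> int d * int n"
    and gamma_pos: "\<And>p q. is_edge d n p q \<Longrightarrow> \<gamma> p q > 0"
    and gamma_sym: "\<And>p q. is_edge d n p q \<Longrightarrow> \<gamma> p q = \<gamma> q p"
    and harm: "\<And>p. p \<in> LS d n (t - 1) \<Longrightarrow>
                 (\<Sum>q\<in>nbrs d n p. \<gamma> p q * (u q - u p)) = 0"
    and dir: "\<And>b. b \<in> JS d n (t - 1) \<Longrightarrow> u b = 0"
    and neu: "\<And>b. b \<in> JS d n (t - 1) \<Longrightarrow> \<gamma> b (qb d n b) * (u (qb d n b) - u b) = 0"
  shows "\<forall>x \<in> LS d n t \<union> JS d n (t - 1). u x = 0"
proof -
  have d0: "0 < d" using assms(1) by simp
  define R where "R = inv_image (less_than <*lex*> less_than) (\<lambda>x::int list. (nat (sum_list x), nat (x!0)))"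
  have wfR: "wf R" unfolding R_def by auto
  have RI: "(y, x) \<in> R" if "y \<in> latD d n" "x \<in> latD d n"
     "sum_list y < sum_list x \<or> (sum_list y = sum_list x \<and> y!0 < x!0)" for x y
  proof -
    have "0 \<le> sum_list y" "1 \<le> y!0" using that(1) d0 D_sum_nonneg D_facts by blast+
    then show ?thesis using that(3) unfolding R_def by auto
  qed
  have inJSm: "q \<in> JS d n (t - 1)" if "q \<in> bdry d n" "sum_list q \<le> t - 1" "Min (set q) = 0" for q
    using that unfolding JS_def KSminus_def Kminus_def by blast
  have inJSp: "q \<in> JS d n (t - 1)" if "q \<in> bdry d n" "sum_list q \<le> t" "Max (set q) = int n + 1" for q
    using that unfolding JS_def KSplus_def Kplus_def by auto
  have main: "x \<in> latD d n \<longrightarrow> sum_list x \<le> t \<longrightarrow> u x = 0" for x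
  proof (induction x rule: wf_induct[OF wfR])
    case (1 x)
    show ?case
    proof (intro impI)
      assume xD: "x \<in> latD d n" and xs: "sum_list x \<le> t"
      have lx: "length x = d" and xr: "\<And>i. i < d \<Longrightarrow> 1 \<le> x!i \<and> x!i \<le> int n"
        using D_facts[OF xD] by auto
      show "u x = 0"
      proof (cases "\<exists>i<d. x!i = 1")
        case True
        then obtain i where i: "i < d" "x!i = 1" by blast
        let ?b = "x[i := 0]"
        note Q = qb_low[OF xD i]
        have sb: "sum_list ?b = sum_list x - 1" using i lx by (simp add: sum_list_upd)
        have mb: "Min (set ?b) = 0"
        proof (rule Min_eqI)
          show "0 \<in> set ?b" using i lx by (simp add: set_update_memI)
          show "0 \<le> y" if "y \<in> set ?b" for y
          proof -
            have xnn: "\<forall>k<d. 0 \<le> x!k" using xr by force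
            then show ?thesis using that lx i by (auto simp: in_set_conv_nth nth_list_update split: if_splits)
          qed
        qed simp
        have bJ: "?b \<in> JS d n (t - 1)" using inJSm Q(2) sb mb xs by simp
        have "\<gamma> ?b x * (u x - 0) = 0" using neu[OF bJ] dir[OF bJ] Q(1) by simp
        moreover have "\<gamma> ?b x > 0" using gamma_pos Q(3) by blast
        ultimately show ?thesis by simp
      next
        case False
        then have x2: "\<And>i. i < d \<Longrightarrow> 2 \<le> x!i" using xr by force
        define p where "p = x[0 := x!0 + (-1)]"
        have lp: "length p = d" using lx p_def by simp
        have a0: "2 \<le> x!0" "x!0 \<le> int n" using x2[OF d0] xr[OF d0] by auto
        have pr: "\<And>i. i < d \<Longrightarrow> 1 \<le> p!i \<and> p!i \<le> int n"
        proof -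
          fix i assume i: "i < d"
          show "1 \<le> p!i \<and> p!i \<le> int n"
          proof (cases "i = 0")
            case True
            then have "p!i = x!0 - 1" using lx d0 by (simp add: p_def)
            then show ?thesis using a0 by simp
          next
            case False
            then have "p!i = x!i" by (simp add: p_def)
            then show ?thesis using xr[OF i] by simp
          qed
        qed
        have pD: "p \<in> latD d n" using lp pr by (simp add: latD_def)
        have sp: "sum_list p = sum_list x - 1" using d0 lx by (simp add: p_def sum_list_upd)
        have up: "u p = 0" using 1 RI[OF pD xD] sp pD xs by auto
        have xp: "x = p[0 := p!0 + 1]" using d0 lx by (simp add: p_def)
        have Epx: "is_edge d n p x" using adj_in[OF pD d0, of 1] xp xD by simp
        have pL: "p \<in> LS d n (t - 1)" using pD sp xs by (simp add: LS_def)
        have rest: "u q = 0" if qN: "q \<in> nbrs d n p" "q \<noteq> x" for q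
        proof -
          have Eq: "is_edge d n p q" using qN by (simp add: nbrs_def)
          have "l1dist p q = 1" "length q = d" using Eq edge_len[OF Eq] by (auto simp: is_edge_def)
          then have "\<exists>j<d. \<exists>e\<in>{-1,1}. q = p[j := p!j + e]"
            using l1_form[of p q] lp by simp
          then obtain j e where j: "j < d" and e: "e \<in> {-1,1}" and qe: "q = p[j := p!j + e]"
            by blast
          have sq: "sum_list q = sum_list x - 1 + e" using j lp sp qe by (simp add: sum_list_upd)
          have qo: "\<And>k. k < d \<Longrightarrow> k \<noteq> j \<Longrightarrow> q!k = p!k" using qe by simp
          have qj: "q!j = p!j + e" using qe j lp by simp
          show ?thesis
          proof (cases "q \<in> latD d n")
            case True
            show ?thesis
            proof (cases "e = -1")
              case True
              then show ?thesis using 1 RI[OF \<open>q \<in> latD d n\<close> xD] sq xs \<open>q \<in> latD d n\<close> by auto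
            next
              case False
              then have e1: "e = 1" using e by simp
              have "j \<noteq> 0"
              proof
                assume "j = 0" then have "q = x" using qe xp e1 by simp
                then show False using qN(2) by simp
              qed
              then have "q!0 < x!0" using qo[OF d0] lx d0 unfolding p_def by simp
              then show ?thesis using 1 RI[OF \<open>q \<in> latD d n\<close> xD] sq xs e1 \<open>q \<in> latD d n\<close> by auto
            qed
          next
            case False
            have qB: "q \<in> bdry d n" using Eq False by (auto simp: is_edge_def)
            have "\<not> (1 \<le> q!j \<and> q!j \<le> int n)"
            proof
              assume "1 \<le> q!j \<and> q!j \<le> int n"
              then have "\<forall>k<d. 1 \<le> q!k \<and> q!k \<le> int n" using qo pr by (metis)
              then show False using False \<open>length q = d\<close> by (simp add: latD_def)
            qed
            have qset: "\<And>y. y \<in> set q \<Longrightarrow> 0 \<le> y \<and> y \<le> int n + 1"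
            proof -
              fix y assume "y \<in> set q"
              then obtain k where "k < d" "y = q!k" using \<open>length q = d\<close> by (auto simp: in_set_conv_nth)
              then show "0 \<le> y \<and> y \<le> int n + 1" using qo qj pr[of k] pr[of j] j e
                by (cases "k = j") auto
            qed
            show ?thesis
            proof (cases "e = -1")
              case True
              then have "q!j = 0" using qj pr[OF j] \<open>\<not> (1 \<le> q!j \<and> q!j \<le> int n)\<close> by auto
              have "Min (set q) = 0"
              proof (rule Min_eqI)
                show "0 \<in> set q" using \<open>q!j = 0\<close> j \<open>length q = d\<close> by (metis nth_mem)
              qed (use qset in auto)
              then show ?thesis using dir inJSm qB sq True xs by simp
            next
              case False
              then have e1: "e = 1" using e by simp
              then have "q!j = int n + 1" using qj pr[OF j] \<open>\<not> (1 \<le> q!j \<and> q!j \<le> int n)\<close> by auto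
              have "Max (set q) = int n + 1"
              proof (rule Max_eqI)
                show "int n + 1 \<in> set q" using \<open>q!j = int n + 1\<close> j \<open>length q = d\<close> by (metis nth_mem)
              qed (use qset in auto)
              then show ?thesis using dir inJSp qB sq e1 xs by simp
            qed
          qed
        qed
        have xN: "x \<in> nbrs d n p" using Epx by (simp add: nbrs_def)
        have "0 = (\<Sum>q\<in>nbrs d n p. \<gamma> p q * (u q - u p))" using harm[OF pL] by simp
        also have "\<dots> = \<gamma> p x * (u x - u p) + (\<Sum>q\<in>nbrs d n p - {x}. \<gamma> p q * (u q - u p))"
          using xN nbrs_fin by (simp add: sum.remove)
        also have "(\<Sum>q\<in>nbrs d n p - {x}. \<gamma> p q * (u q - u p)) = 0"
          using rest up by (intro sum.neutral) auto
        finally have "\<gamma> p x * u x = 0" using up by simp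
        moreover have "\<gamma> p x > 0" using gamma_pos Epx by blast
        ultimately show ?thesis by simp
      qed
    qed
  qed
  show ?thesis using main dir by (auto simp: LS_def)
qed

end
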